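(* Let $\alpha>1$ and let $X=\{x_j:j\in J\}\subset\mathbb{R}^2$ be finite. If $s_2^*$ is equidistant from all points of $X$, then $s_\alpha^*=s_2^*$.
   Context: For $\beta>1$, $s_\beta^*$ denotes the unique minimiser of $P_\beta(s,X)=\sum_{j\in J}\|s-x_j\|^\beta+\max_{j\in J}\|s-x_j\|^\beta$ over $s\in\mathbb{R}^2$. *)

theory Defs
  imports "HOL-Analysis.Analysis"
begin

definition P :: "real \<Rightarrow> real^2 \<Rightarrow> (real^2) set \<Rightarrow> real" where
  "P \<beta> s X = (\<Sum>x\<in>X. norm (s - x) powr \<beta>) + Max ((\<lambda>x. norm (s - x) powr \<beta>) ` X)"

definition s_star :: "real \<Rightarrow> (real^2) set \<Rightarrow> real^2" where
  "s_star \<beta> X = (THE s. \<forall>t. P \<beta> s X \<le> P \<beta> t X)"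

end

theory Submission
  imports Defs
begin


lemma bern:
  fixes a b \<alpha> :: real
  assumes "0 \<le> a" "0 < b" "\<alpha> > 1" "a \<noteq> b"
  shows "a powr \<alpha> > b powr \<alpha> + \<alpha> * b powr (\<alpha> - 1) * (a - b)"
proof (cases "a = 0")
  case True
  have "b powr \<alpha> = b powr (\<alpha> - 1) * b" using assms by (simp add: powr_diff)
  hence "b powr \<alpha> + \<alpha> * b powr (\<alpha> - 1) * (a - b) = b powr (\<alpha> - 1) * b * (1 - \<alpha>)"
    using True by (simp add: algebra_simps)
  also have "\<dots> < 0" using assms by (intro mult_pos_neg) auto
  finally show ?thesis using True by simp
next
  case False
  hence a0: "a > 0" using assms by auto
  have der: "\<And>x. x > 0 \<Longrightarrow> DERIV (\<lambda>z. z powr \<alpha>) x :> \<alpha> * x powr (\<alpha> - 1)"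
    by (rule has_real_derivative_powr)
  show ?thesis
  proof (cases "a < b")
    case True
    obtain z where z: "a < z" "z < b" "b powr \<alpha> - a powr \<alpha> = (b - a) * (\<alpha> * z powr (\<alpha> - 1))"
      using MVT2[OF True, of "\<lambda>z. z powr \<alpha>" "\<lambda>x. \<alpha> * x powr (\<alpha> - 1)"] der a0 by force
    have "z powr (\<alpha> - 1) < b powr (\<alpha> - 1)" using z a0 assms by (intro powr_less_mono2) auto
    hence "(b - a) * (\<alpha> * z powr (\<alpha> - 1)) < (b - a) * (\<alpha> * b powr (\<alpha> - 1))"
      using True assms by (intro mult_strict_left_mono) auto
    thus ?thesis using z(3) by (simp add: algebra_simps)
  next
    case False
    hence ba: "b < a" using assms by auto
    obtain z where z: "b < z" "z < a" "a powr \<alpha> - b powr \<alpha> = (a - b) * (\<alpha> * z powr (\<alpha> - 1))"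
      using MVT2[OF ba, of "\<lambda>z. z powr \<alpha>" "\<lambda>x. \<alpha> * x powr (\<alpha> - 1)"] der assms by force
    have "b powr (\<alpha> - 1) < z powr (\<alpha> - 1)" using z assms by (intro powr_less_mono2) auto
    hence "(a - b) * (\<alpha> * b powr (\<alpha> - 1)) < (a - b) * (\<alpha> * z powr (\<alpha> - 1))"
      using ba assms by (intro mult_strict_left_mono) auto
    thus ?thesis using z(3) by (simp add: algebra_simps)
  qed
qed

lemma grad:
  fixes y z :: "real^2" and \<alpha> :: real
  assumes "\<alpha> > 1" "y \<noteq> z"
  shows "norm y powr \<alpha> > norm z powr \<alpha> + \<alpha> * norm z powr (\<alpha> - 2) * (z \<bullet> (y - z))"
proof (cases "z = 0")
  case True
  thus ?thesis using assms by simp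
next
  case False
  define a b where "a = norm y" and "b = norm z"
  have b0: "b > 0" using False b_def by simp
  have a0: "a \<ge> 0" using a_def by simp
  have e1: "b powr (\<alpha> - 2) * b\<^sup>2 = b powr \<alpha>" using b0
    by (simp add: powr_diff power2_eq_square)
  have e2: "b powr (\<alpha> - 2) * b = b powr (\<alpha> - 1)" using b0
    by (simp add: powr_diff power2_eq_square)
  have zz: "z \<bullet> z = b\<^sup>2" using b_def by (simp add: power2_norm_eq_inner)
  have cs: "z \<bullet> y \<le> b * a" using Cauchy_Schwarz_ineq2[of z y] a_def b_def by simp
  have c: "b powr (\<alpha> - 2) > 0" using b0 by simp
  have rhs: "\<alpha> * b powr (\<alpha> - 2) * (z \<bullet> (y - z)) = \<alpha> * (b powr (\<alpha> - 2) * (z \<bullet> y)) - \<alpha> * b powr \<alpha>"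
    using e1 zz by (simp add: inner_diff_right algebra_simps)
  show ?thesis
  proof (cases "a = b")
    case True
    have "norm (y - z)^2 > 0" using assms by simp
    moreover have "y \<bullet> y = b\<^sup>2" using True a_def by (metis power2_norm_eq_inner)
    ultimately have "z \<bullet> y < b\<^sup>2" using zz
      by (simp add: power2_norm_eq_inner inner_diff_left inner_diff_right inner_commute)
    hence "b powr (\<alpha> - 2) * (z \<bullet> y) < b powr (\<alpha> - 2) * b\<^sup>2" using c by simp
    hence "\<alpha> * (b powr (\<alpha> - 2) * (z \<bullet> y)) < \<alpha> * b powr \<alpha>" using e1 assms by simp
    thus ?thesis using rhs True a_def b_def by simp
  next
    case False
    have "b powr (\<alpha> - 2) * (z \<bullet> y) \<le> b powr (\<alpha> - 2) * (b * a)" using cs c by simp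
    also have "\<dots> = b powr (\<alpha> - 1) * a" using e2 by (simp add: algebra_simps)
    finally have "\<alpha> * (b powr (\<alpha> - 2) * (z \<bullet> y)) \<le> \<alpha> * (b powr (\<alpha> - 1) * a)" using assms by simp
    moreover have "a powr \<alpha> > b powr \<alpha> + \<alpha> * b powr (\<alpha> - 1) * (a - b)"
      using bern[OF a0 b0 assms(1) False] .
    moreover have "\<alpha> * b powr (\<alpha> - 1) * (a - b) = \<alpha> * (b powr (\<alpha> - 1) * a) - \<alpha> * b powr \<alpha>"
      using b0 by (simp add: powr_diff field_simps)
    moreover have "norm z powr \<alpha> + \<alpha> * norm z powr (\<alpha> - 2) * (z \<bullet> (y - z)) = b powr \<alpha> + \<alpha> * (b powr (\<alpha> - 2) * (z \<bullet> y)) - \<alpha> * b powr \<alpha>"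
      using rhs b_def by simp
    moreover have "norm y powr \<alpha> = a powr \<alpha>" using a_def by simp
    ultimately show ?thesis by linarith
  qed
qed



lemma cont_Max:
  fixes f :: "'a \<Rightarrow> 'b::topological_space \<Rightarrow> real"
  assumes "finite X" "X \<noteq> {}" "\<forall>x\<in>X. continuous_on K (f x)"
  shows "continuous_on K (\<lambda>t. Max ((\<lambda>x. f x t) ` X))"
  using assms
proof (induction X rule: finite_ne_induct)
  case (singleton x)
  then show ?case by simp
next
  case (insert x F)
  have "(\<lambda>t. Max ((\<lambda>x. f x t) ` insert x F)) = (\<lambda>t. max (f x t) (Max ((\<lambda>x. f x t) ` F)))"
    using insert by simp
  then show ?case using insert by (simp add: continuous_on_max)
qed

lemma P2: "P 2 t X = (\<Sum>x\<in>X. norm (t - x)^2) + Max ((\<lambda>x. norm (t - x)^2) ` X)"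
  by (simp add: P_def)

lemma P_nonneg: "finite X \<Longrightarrow> X \<noteq> {} \<Longrightarrow> 0 \<le> P \<beta> t X"
  unfolding P_def
  by (intro add_nonneg_nonneg sum_nonneg) (auto simp: Max_ge_iff)

lemma ex_min2:
  assumes "finite X" "X \<noteq> {}"
  shows "\<exists>m. \<forall>t. P 2 m X \<le> P 2 t X"
proof -
  obtain x0 where x0: "x0 \<in> X" using assms by auto
  define R where "R = P 2 x0 X + 1"
  have R1: "R \<ge> 1" using P_nonneg[OF assms] R_def by simp
  have cont: "continuous_on (cball x0 R) (\<lambda>t. P 2 t X)"
    unfolding P2
    by (intro continuous_intros cont_Max assms ballI continuous_on_power continuous_on_norm continuous_on_diff continuous_on_id continuous_on_const)
  obtain m where m: "m \<in> cball x0 R" "\<forall>y\<in>cball x0 R. P 2 m X \<le> P 2 y X"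
    using continuous_attains_inf[OF compact_cball _ cont] R1 by auto
  have "P 2 m X \<le> P 2 t X" for t
  proof (cases "t \<in> cball x0 R")
    case True then show ?thesis using m by auto
  next
    case False
    hence d: "norm (t - x0) > R" by (simp add: dist_norm norm_minus_commute)
    have "R \<le> R^2" using R1 by (simp add: power2_eq_square)
    also have "R^2 < norm (t - x0)^2" using d R1 by (intro power_strict_mono) auto
    also have "norm (t - x0)^2 \<le> (\<Sum>x\<in>X. norm (t - x)^2)"
      using x0 assms by (intro member_le_sum) auto
    also have "\<dots> \<le> P 2 t X" unfolding P2 using assms by (auto simp: Max_ge_iff)
    finally have "P 2 x0 X < P 2 t X" using R_def by simp
    moreover have "P 2 m X \<le> P 2 x0 X" using m R1 by auto
    ultimately show ?thesis by simp
  qed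
  thus ?thesis by blast
qed

lemma midpoint_sq:
  fixes a b :: "real^2"
  shows "norm ((1/2) *\<^sub>R (a + b))^2 = (norm a^2 + norm b^2)/2 - norm (a - b)^2/4"
  by (simp add: power2_norm_eq_inner inner_add_left inner_add_right inner_diff_left
      inner_diff_right inner_commute algebra_simps) (simp add: field_simps)

lemma uniq2:
  assumes "finite X" "X \<noteq> {}"
    and m1: "\<forall>t. P 2 t1 X \<le> P 2 t X" and m2: "\<forall>t. P 2 t2 X \<le> P 2 t X"
  shows "t1 = t2"
proof (rule ccontr)
  assume ne: "t1 \<noteq> t2"
  define u where "u = (1/2) *\<^sub>R (t1 + t2)"
  define \<delta> where "\<delta> = norm (t1 - t2)^2 / 4"
  have \<delta>: "\<delta> > 0" using ne unfolding \<delta>_def by simp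
  have eq: "norm (u - x)^2 = (norm (t1 - x)^2 + norm (t2 - x)^2)/2 - \<delta>" for x
  proof -
    have "x = (1/2) *\<^sub>R (x + x)" by (simp add: scaleR_add_right[symmetric] flip: scaleR_add_left)
    hence "u - x = (1/2) *\<^sub>R ((t1 - x) + (t2 - x))" unfolding u_def
      by (metis (no_types, lifting) add_diff_add scaleR_diff_right)
    thus ?thesis using midpoint_sq[of "t1 - x" "t2 - x"] \<delta>_def by simp
  qed
  have s: "(\<Sum>x\<in>X. norm (u - x)^2) < ((\<Sum>x\<in>X. norm (t1 - x)^2) + (\<Sum>x\<in>X. norm (t2 - x)^2))/2"
  proof -
    have "(\<Sum>x\<in>X. norm (u - x)^2) < (\<Sum>x\<in>X. (norm (t1 - x)^2 + norm (t2 - x)^2)/2)"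
      using assms \<delta> by (intro sum_strict_mono) (auto simp: eq field_simps)
    also have "\<dots> = ((\<Sum>x\<in>X. norm (t1 - x)^2) + (\<Sum>x\<in>X. norm (t2 - x)^2))/2"
      by (simp add: sum_divide_distrib[symmetric] sum.distrib)
    finally show ?thesis .
  qed
  have mx: "Max ((\<lambda>x. norm (u - x)^2) ` X) \<le>
      (Max ((\<lambda>x. norm (t1 - x)^2) ` X) + Max ((\<lambda>x. norm (t2 - x)^2) ` X))/2"
  proof (rule Max.boundedI)
    show "finite ((\<lambda>x. norm (u - x)^2) ` X)" using assms by simp
    show "(\<lambda>x. norm (u - x)^2) ` X \<noteq> {}" using assms by simp
    fix y assume "y \<in> (\<lambda>x. norm (u - x)^2) ` X"
    then obtain x where x: "x \<in> X" "y = norm (u - x)^2" by auto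
    have h1: "norm (t1 - x)^2 \<le> Max ((\<lambda>x. norm (t1 - x)^2) ` X)" using x assms by (intro Max_ge) auto
    have h2: "norm (t2 - x)^2 \<le> Max ((\<lambda>x. norm (t2 - x)^2) ` X)" using x assms by (intro Max_ge) auto
    have "y = (norm (t1 - x)^2 + norm (t2 - x)^2)/2 - \<delta>" using x eq[of x] by simp
    also have "\<dots> \<le> (norm (t1 - x)^2 + norm (t2 - x)^2)/2" using \<delta> by linarith
    also have "\<dots> \<le> (Max ((\<lambda>x. norm (t1 - x)^2) ` X) + Max ((\<lambda>x. norm (t2 - x)^2) ` X))/2"
      using add_mono[OF h1 h2] by (simp add: divide_right_mono)
    finally show "y \<le> (Max ((\<lambda>x. norm (t1 - x)^2) ` X) + Max ((\<lambda>x. norm (t2 - x)^2) ` X))/2" .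
  qed
  have "P 2 u X < (P 2 t1 X + P 2 t2 X)/2" using s mx unfolding P2 by simp
  moreover have "P 2 t1 X = P 2 t2 X" using m1 m2 by (meson order_antisym)
  ultimately have "P 2 u X < P 2 t1 X" by simp
  thus False using m1 by (meson not_less)
qed



lemma norm_add_sq: "norm (a + b)^2 = norm a^2 + 2 * (a \<bullet> b) + norm (b::real^2)^2"
  by (simp add: power2_norm_eq_inner inner_add_left inner_add_right inner_commute)

lemma foc:
  assumes fin: "finite X" and ne: "X \<noteq> {}"
    and min: "\<forall>t. P 2 s X \<le> P 2 t X" and eqd: "\<forall>x\<in>X. norm (s - x) = r"
  shows "0 \<le> (\<Sum>x\<in>X. (s - x) \<bullet> v) + Max ((\<lambda>x. (s - x) \<bullet> v) ` X)"
proof (rule ccontr)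
  define g where "g x = (s - x) \<bullet> v" for x
  define A where "A = sum g X + Max (g ` X)"
  assume "\<not> 0 \<le> (\<Sum>x\<in>X. (s - x) \<bullet> v) + Max ((\<lambda>x. (s - x) \<bullet> v) ` X)"
  hence A0: "A < 0" unfolding A_def g_def by simp
  define n where "n = real (card X)"
  define N where "N = (n + 1) * norm v^2"
  have N0: "N \<ge> 0" unfolding N_def n_def by simp
  define \<epsilon> where "\<epsilon> = - A / (N + 1)"
  have e0: "\<epsilon> > 0" unfolding \<epsilon>_def using A0 N0 by (simp add: divide_neg_pos)
  define t where "t = s + \<epsilon> *\<^sub>R v"
  have nt: "norm (t - x)^2 = r^2 + 2 * \<epsilon> * g x + \<epsilon>^2 * norm v^2" if "x \<in> X" for x
  proof -
    have eq: "t - x = (s - x) + \<epsilon> *\<^sub>R v" unfolding t_def by (simp add: algebra_simps)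
    have "norm (t - x)^2 = norm (s - x)^2 + 2 * ((s - x) \<bullet> (\<epsilon> *\<^sub>R v)) + norm (\<epsilon> *\<^sub>R v)^2"
      by (subst eq) (rule norm_add_sq)
    thus ?thesis using eqd that e0 unfolding g_def by (simp add: power_mult_distrib)
  qed
  have Ps: "P 2 s X = (n + 1) * r^2"
  proof -
    have "(\<lambda>x. norm (s - x)^2) ` X = {r^2}" using eqd ne by auto
    moreover have "(\<Sum>x\<in>X. norm (s - x)^2) = n * r^2" using eqd unfolding n_def by simp
    ultimately show ?thesis unfolding P2 by (simp add: algebra_simps)
  qed
  have sumt: "(\<Sum>x\<in>X. norm (t - x)^2) = n * r^2 + 2 * \<epsilon> * sum g X + n * (\<epsilon>^2 * norm v^2)"
  proof -
    have "(\<Sum>x\<in>X. norm (t - x)^2) = (\<Sum>x\<in>X. r^2 + 2 * \<epsilon> * g x + \<epsilon>^2 * norm v^2)"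
      using nt by (intro sum.cong) auto
    also have "\<dots> = n * r^2 + 2 * \<epsilon> * sum g X + n * (\<epsilon>^2 * norm v^2)"
      unfolding n_def by (simp add: sum.distrib sum_distrib_left)
    finally show ?thesis .
  qed
  have maxt: "Max ((\<lambda>x. norm (t - x)^2) ` X) \<le> r^2 + 2 * \<epsilon> * Max (g ` X) + \<epsilon>^2 * norm v^2"
  proof (rule Max.boundedI)
    show "finite ((\<lambda>x. norm (t - x)^2) ` X)" using fin by simp
    show "(\<lambda>x. norm (t - x)^2) ` X \<noteq> {}" using ne by simp
    fix y assume "y \<in> (\<lambda>x. norm (t - x)^2) ` X"
    then obtain x where x: "x \<in> X" "y = norm (t - x)^2" by auto
    have "g x \<le> Max (g ` X)" using x fin by (intro Max_ge) auto
    hence "2 * \<epsilon> * g x \<le> 2 * \<epsilon> * Max (g ` X)" using e0 by simp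
    thus "y \<le> r^2 + 2 * \<epsilon> * Max (g ` X) + \<epsilon>^2 * norm v^2" using x nt[of x] by linarith
  qed
  have "P 2 s X \<le> P 2 t X" using min by simp
  also have "P 2 t X \<le> n * r^2 + 2 * \<epsilon> * sum g X + n * (\<epsilon>^2 * norm v^2)
      + (r^2 + 2 * \<epsilon> * Max (g ` X) + \<epsilon>^2 * norm v^2)"
    unfolding P2 using sumt maxt by linarith
  finally have "0 \<le> 2 * \<epsilon> * A + \<epsilon> * (\<epsilon> * N)"
    unfolding Ps A_def N_def by (simp add: algebra_simps power2_eq_square)
  hence "0 \<le> \<epsilon> * (2 * A + \<epsilon> * N)" by (simp add: algebra_simps)
  hence h: "0 \<le> 2 * A + \<epsilon> * N" using e0 by (simp add: zero_le_mult_iff)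
  have "\<epsilon> * N = - A * (N / (N + 1))" unfolding \<epsilon>_def by simp
  also have "\<dots> \<le> - A * 1" using A0 N0 by (intro mult_left_mono) auto
  finally show False using h A0 by linarith
qed

lemma strict_alpha:
  assumes fin: "finite X" and ne: "X \<noteq> {}" and a1: "\<alpha> > 1"
    and min: "\<forall>t. P 2 s X \<le> P 2 t X" and eqd: "\<forall>x\<in>X. norm (s - x) = r" and ts: "t \<noteq> s"
  shows "P \<alpha> s X < P \<alpha> t X"
proof -
  define n where "n = real (card X)"
  define c where "c = \<alpha> * r powr (\<alpha> - 2)"
  have c0: "c \<ge> 0" unfolding c_def using a1 by simp
  define g where "g x = (s - x) \<bullet> (t - s)" for x
  have F: "0 \<le> sum g X + Max (g ` X)" using foc[OF fin ne min eqd, of "t - s"] unfolding g_def by simp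
  have pt: "norm (t - x) powr \<alpha> > r powr \<alpha> + c * g x" if "x \<in> X" for x
  proof -
    have "t - x \<noteq> s - x" using ts by simp
    from grad[OF a1 this] show ?thesis using eqd that unfolding c_def g_def by (simp add: algebra_simps)
  qed
  have "Max (g ` X) \<in> g ` X" using fin ne by (intro Max_in) auto
  then obtain x1 where x1: "x1 \<in> X" "g x1 = Max (g ` X)" by auto
  have Ps: "P \<alpha> s X = (n + 1) * r powr \<alpha>"
  proof -
    have "(\<lambda>x. norm (s - x) powr \<alpha>) ` X = {r powr \<alpha>}" using eqd ne by auto
    moreover have "(\<Sum>x\<in>X. norm (s - x) powr \<alpha>) = n * r powr \<alpha>" using eqd unfolding n_def by simp
    ultimately show ?thesis unfolding P_def by (simp add: algebra_simps)
  qed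
  have "n * r powr \<alpha> + c * sum g X = (\<Sum>x\<in>X. r powr \<alpha> + c * g x)"
    unfolding n_def by (simp add: sum.distrib sum_distrib_left)
  also have "\<dots> < (\<Sum>x\<in>X. norm (t - x) powr \<alpha>)"
    using fin ne pt by (intro sum_strict_mono) auto
  finally have s1: "n * r powr \<alpha> + c * sum g X < (\<Sum>x\<in>X. norm (t - x) powr \<alpha>)" .
  have "r powr \<alpha> + c * g x1 < norm (t - x1) powr \<alpha>" by (rule pt[OF x1(1)])
  also have "\<dots> \<le> Max ((\<lambda>x. norm (t - x) powr \<alpha>) ` X)" using x1 fin by (intro Max_ge) auto
  finally have s2: "r powr \<alpha> + c * Max (g ` X) < Max ((\<lambda>x. norm (t - x) powr \<alpha>) ` X)" using x1 by simp
  have "0 \<le> c * (sum g X + Max (g ` X))" using c0 F by simp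
  hence "(n + 1) * r powr \<alpha> \<le> n * r powr \<alpha> + c * sum g X + (r powr \<alpha> + c * Max (g ` X))"
    by (simp add: algebra_simps)
  thus ?thesis unfolding Ps using s1 s2 unfolding P_def by linarith
qed

theorem proposition6:
  fixes \<alpha> :: real and X :: "(real^2) set"
  assumes "\<alpha> > 1" and "finite X" and "X \<noteq> {}"
    and "\<exists>r. \<forall>x\<in>X. dist (s_star 2 X) x = r"
  shows "s_star \<alpha> X = s_star 2 X"
proof -
  have ex1: "\<exists>!s. \<forall>t. P 2 s X \<le> P 2 t X"
    using ex_min2[OF assms(2,3)] uniq2[OF assms(2,3)] by blast
  define s where "s = s_star 2 X"
  have min: "\<forall>t. P 2 s X \<le> P 2 t X" unfolding s_def s_star_def using theI'[OF ex1] .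
  obtain r where r: "\<forall>x\<in>X. norm (s - x) = r" using assms(4) unfolding s_def by (auto simp: dist_norm)
  have st: "P \<alpha> s X < P \<alpha> t X" if "t \<noteq> s" for t
    using strict_alpha[OF assms(2,3,1) min r that] .
  have "s_star \<alpha> X = s" unfolding s_star_def
  proof (rule the_equality)
    show "\<forall>t. P \<alpha> s X \<le> P \<alpha> t X" using st by (metis order_le_less)
    fix s' assume "\<forall>t. P \<alpha> s' X \<le> P \<alpha> t X"
    thus "s' = s" using st by (metis not_less)
  qed
  thus ?thesis unfolding s_def .
qed

end
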